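(* Fix $\sigma>0$ and let $\mathcal Q_{\sigma^2}$ be the set of all distributions $Q$ of real-valued processes $\{X_t\}_{t\in\mathbb N^+}$ such that, for some $\mu_Q\in\mathbb R$ and with respect to the natural filtration $\mathcal F_t=\sigma(X_1,\dots,X_t)$ ($\mathcal F_0$ trivial), $\mathbb E_Q[X_t\mid\mathcal F_{t-1}]=\mu_Q$ and $\mathbb E_Q[(X_t-\mu_Q)^2\mid\mathcal F_{t-1}]\le\sigma^2$ for all $t\in\mathbb N^+$. Let $\alpha,\varepsilon>0$ with $\alpha+2\varepsilon<1$, and fix $t\in\mathbb N^+$. For a tail-symmetric $(1-\alpha)$-CI $\{[\mathrm{lw}_t,\mathrm{up}_t]\}$ over $\mathcal Q_{\sigma^2}$ and $Q\in\mathcal Q_{\sigma^2}$, let $w^{Q,\varepsilon}_t$ be the number such that $\Pr_{\{X_i\}\sim Q}[\mathrm{up}_t-\mathrm{lw}_t\le w^{Q,\varepsilon}_t]=1-\varepsilon$, and define $$\mathcal M_t(\alpha,\varepsilon)=\inf_{[\mathrm{lw}_t,\mathrm{up}_t]}\ \sup_{Q\in\mathcal Q_{\sigma^2}}w^{Q,\varepsilon}_t,$$ the infimum being over all tail-symmetric $(1-\alpha)$-CIs over $\mathcal Q_{\sigma^2}$. Then, with $\Phi^{-1}$ the quantile function of the standard normal distribution, $$\mathcal M_t(\alpha,\varepsilon)\ge\frac{2\sigma}{\sqrt t}\Phi^{-1}(1-\alpha/2-\varepsilon)=\frac{2\sigma}{\sqrt t}\left(\sqrt{\log\frac{4}{(\alpha+2\varepsilon)^2}-\log\log\frac{4}{(\alpha+2\varepsilon)^2}-\log(2\pi)}+\mathcal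 O(1)\right),$$ where $\mathcal O(1)$ is with respect to $\alpha,\varepsilon\to0$.
   Context: A sequence of data-dependent intervals $\{[\mathrm{lw}_t,\mathrm{up}_t]\}_{t\in\mathbb N^+}$, with $\mathrm{lw}_t,\mathrm{up}_t:\mathbb R^t\to\mathbb R$, is a tail-symmetric $(1-\alpha)$-CI over a family $\mathcal Q$ of distributions over $\mathbb R^{\mathbb N^+}$ (each with mean $\mathbb E_Q[X_t]=\mu_Q$ independent of $t$) if for every $t\in\mathbb N^+$ and every $Q\in\mathcal Q$: $\Pr_{\{X_i\}\sim Q}[\mu_Q\le\mathrm{lw}_t(X_1,\dots,X_t)]\le\alpha/2$ and $\Pr_{\{X_i\}\sim Q}[\mu_Q\ge\mathrm{up}_t(X_1,\dots,X_t)]\le\alpha/2$. *)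

theory Defs
  imports "HOL-Probability.Probability" "HOL-Library.Landau_Symbols"
begin

text \<open>Path space of real-valued processes. The process X_1, X_2, ... is encoded
  as a path w :: nat => real with X_t = w (t - 1), for t >= 1.\<close>
definition path_space :: "(nat \<Rightarrow> real) measure" where
  "path_space = PiM UNIV (\<lambda>_. (borel :: real measure))"

text \<open>Natural filtration: natF Q n = sigma(X_1,...,X_n) = sigma(w 0, ..., w (n-1));
  natF Q 0 is the trivial sigma-algebra.\<close>
definition natF :: "(nat \<Rightarrow> real) measure \<Rightarrow> nat \<Rightarrow> (nat \<Rightarrow> real) measure" where
  "natF Q n = sigma (space Q)
     {(\<lambda>w. w i) -` A \<inter> space Q | i A. i < n \<and> A \<in> sets (borel :: real measure)}"

text \<open>Membership of the distribution Q (with mean mu) in the class Q_{sigma^2}: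
  conditional mean mu and conditional variance at most sigma^2 w.r.t. the natural
  filtration, for every t >= 1. (Square-integrability of X_t is part of making the
  conditional expectations meaningful; it is implied by the conditional variance bound.)\<close>
definition in_Qsig :: "real \<Rightarrow> (nat \<Rightarrow> real) measure \<Rightarrow> real \<Rightarrow> bool" where
  "in_Qsig \<sigma> Q \<mu> \<longleftrightarrow> prob_space Q \<and> sets Q = sets path_space \<and>
     (\<forall>t\<ge>1. integrable Q (\<lambda>w. (w (t - 1))\<^sup>2) \<and>
        (AE w in Q. real_cond_exp Q (natF Q (t - 1)) (\<lambda>w. w (t - 1)) w = \<mu>) \<and>
        (AE w in Q. real_cond_exp Q (natF Q (t - 1)) (\<lambda>w. (w (t - 1) - \<mu>)\<^sup>2) w \<le> \<sigma>\<^sup>2))"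

text \<open>Tail-symmetric (1-alpha)-CI over a family fam (given as a predicate on
  (distribution, mean) pairs). lw t, up t are Borel functions of X_1..X_t,
  encoded as measurable functions on path space depending only on w 0..w (t-1).\<close>
definition tail_sym_CI ::
  "((nat \<Rightarrow> real) measure \<Rightarrow> real \<Rightarrow> bool) \<Rightarrow> real \<Rightarrow>
   (nat \<Rightarrow> (nat \<Rightarrow> real) \<Rightarrow> real) \<Rightarrow> (nat \<Rightarrow> (nat \<Rightarrow> real) \<Rightarrow> real) \<Rightarrow> bool" where
  "tail_sym_CI fam \<alpha> lw up \<longleftrightarrow>
     (\<forall>t\<ge>1. lw t \<in> borel_measurable path_space \<and> up t \<in> borel_measurable path_space \<and>
        (\<forall>w w'. (\<forall>i<t. w i = w' i) \<longrightarrow> lw t w = lw t w' \<and> up t w = up t w')) \<and>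
     (\<forall>Q \<mu> t. fam Q \<mu> \<and> t \<ge> 1 \<longrightarrow>
        measure Q {w \<in> space Q. \<mu> \<le> lw t w} \<le> \<alpha> / 2 \<and>
        measure Q {w \<in> space Q. \<mu> \<ge> up t w} \<le> \<alpha> / 2)"

definition width_q ::
  "(nat \<Rightarrow> real) measure \<Rightarrow> real \<Rightarrow>
   (nat \<Rightarrow> (nat \<Rightarrow> real) \<Rightarrow> real) \<Rightarrow> (nat \<Rightarrow> (nat \<Rightarrow> real) \<Rightarrow> real) \<Rightarrow> nat \<Rightarrow> real" where
  "width_q Q \<epsilon> lw up t =
     Inf {c. 1 - \<epsilon> \<le> measure Q {w \<in> space Q. up t w - lw t w \<le> c}}"

definition minimax_width :: "real \<Rightarrow> real \<Rightarrow> real \<Rightarrow> nat \<Rightarrow> ereal" where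
  "minimax_width \<sigma> \<alpha> \<epsilon> t =
     Inf {Sup {ereal (width_q Q \<epsilon> lw up t) | Q \<mu>. in_Qsig \<sigma> Q \<mu>}
          | lw up. tail_sym_CI (in_Qsig \<sigma>) \<alpha> lw up}"

definition Phi :: "real \<Rightarrow> real" where
  "Phi x = measure (density lborel std_normal_density) {..x}"

definition Phi_inv :: "real \<Rightarrow> real" where
  "Phi_inv p = Inf {x. p \<le> Phi x}"

end

theory Submission
  imports Defs "HOL-Real_Asymp.Real_Asymp"
begin

abbreviation "phi \<equiv> std_normal_density"

lemma phi_int: "integrable lborel phi" by simp

lemma phi_ind_int: "A \<in> sets borel \<Longrightarrow> integrable lborel (\<lambda>x. indicator A x * phi x)"
  using integrable_mult_indicator[of A lborel phi] by simp

lemma measure_std_density: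
  assumes "A \<in> sets borel"
  shows "measure (density lborel phi) A = (LINT x|lborel. indicator A x * phi x)"
proof -
  have "emeasure (density lborel phi) A = (\<integral>\<^sup>+ x. ennreal (phi x) * indicator A x \<partial>lborel)"
    using assms by (subst emeasure_density) auto
  also have "\<dots> = (\<integral>\<^sup>+ x. ennreal (indicator A x * phi x) \<partial>lborel)"
    by (intro nn_integral_cong) (auto simp: indicator_def)
  also have "\<dots> = ennreal (LINT x|lborel. indicator A x * phi x)"
    using assms by (intro nn_integral_eq_integral phi_ind_int) auto
  finally show ?thesis unfolding measure_def
    by (simp add: integral_nonneg_AE)
qed

lemma Phi_eq: "Phi x = (LINT u|lborel. indicator {..x} u * phi u)"
  unfolding Phi_def by (rule measure_std_density) auto

lemma int_phi: "(LINT u|lborel. phi u) = 1" by simp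

lemma Phi_tail: "1 - Phi x = (LINT u|lborel. indicator {x<..} u * phi u)"
proof -
  have "(LINT u|lborel. phi u) = (LINT u|lborel. indicator {..x} u * phi u + indicator {x<..} u * phi u)"
    by (intro Bochner_Integration.integral_cong) (auto simp: indicator_def)
  also have "\<dots> = Phi x + (LINT u|lborel. indicator {x<..} u * phi u)"
    unfolding Phi_eq by (intro Bochner_Integration.integral_add phi_ind_int) auto
  finally show ?thesis by simp
qed

lemma Phi_tail': "1 - Phi x = (LINT u|lborel. indicator {x..} u * phi u)"
proof -
  have "AE u in lborel. indicator {x<..} u * phi u = indicator {x..} u * phi u"
    using AE_lborel_singleton[of x] by eventually_elim (auto simp: indicator_def)
  then show ?thesis unfolding Phi_tail by (rule Bochner_Integration.integral_cong_AE[rotated 2]) auto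
qed

lemma Phi_sym: "Phi (-x) = 1 - Phi x"
proof -
  have "Phi (-x) = \<bar>-1\<bar> * (LINT u|lborel. indicator {..-x} (0 + -1 * u) * phi (0 + -1 * u))"
    unfolding Phi_eq using lborel_integral_real_affine[of "-1" "\<lambda>u. indicator {..-x} u * phi u" 0] by simp
  also have "\<dots> = (LINT u|lborel. indicator {x..} u * phi u)"
    by (simp, intro Bochner_Integration.integral_cong) (auto simp: indicator_def std_normal_density_def)
  finally show ?thesis using Phi_tail' by simp
qed

lemma Phi_0: "Phi 0 = 1/2" using Phi_sym[of 0] by simp

lemma Phi_diff: "x \<le> y \<Longrightarrow> Phi y - Phi x = (LINT u|lborel. indicator {x<..y} u * phi u)"
proof -
  assume "x \<le> y"
  have "(LINT u|lborel. indicator {..y} u * phi u) = (LINT u|lborel. indicator {..x} u * phi u + indicator {x<..y} u * phi u)"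
    using \<open>x \<le> y\<close> by (intro Bochner_Integration.integral_cong) (auto simp: indicator_def)
  also have "\<dots> = Phi x + (LINT u|lborel. indicator {x<..y} u * phi u)"
    unfolding Phi_eq by (intro Bochner_Integration.integral_add phi_ind_int) auto
  finally show ?thesis unfolding Phi_eq by simp
qed

lemma phi_le: "phi u \<le> 1" 
proof -
  have "phi u \<le> 1 / sqrt (2*pi) * 1" unfolding std_normal_density_def
    by (intro mult_left_mono) auto
  also have "1 / sqrt (2*pi) \<le> 1" using pi_gt3 by (auto simp: field_simps)
  finally show ?thesis by simp
qed

lemma Phi_lip: "x \<le> y \<Longrightarrow> Phi y - Phi x \<le> y - x"
proof -
  assume xy: "x \<le> y"
  have "Phi y - Phi x \<le> (LINT u|lborel. indicator {x<..y} u)"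
    unfolding Phi_diff[OF xy]
    by (intro Bochner_Integration.integral_mono phi_ind_int integrable_real_indicator) (use xy in \<open>auto simp: indicator_def phi_le\<close>)
  also have "\<dots> = y - x" using xy by simp
  finally show ?thesis .
qed

lemma Phi_mono: "x \<le> y \<Longrightarrow> Phi x \<le> Phi y"
proof -
  assume xy: "x \<le> y"
  have "0 \<le> (LINT u|lborel. indicator {x<..y} u * phi u)"
    by (intro integral_nonneg_AE) auto
  then show ?thesis using Phi_diff[OF xy] by linarith
qed

lemma continuous_Phi: "continuous_on UNIV Phi"
  unfolding continuous_on_iff
proof (intro ballI allI impI)
  fix x e :: real assume "0 < e"
  show "\<exists>d>0. \<forall>x'\<in>UNIV. dist x' x < d \<longrightarrow> dist (Phi x') (Phi x) < e"
  proof (intro exI[of _ e] conjI ballI impI \<open>0<e\<close>)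
    fix y assume "dist y x < e"
    then show "dist (Phi y) (Phi x) < e"
      using Phi_lip[of x y] Phi_lip[of y x] Phi_mono[of x y] Phi_mono[of y x]
      by (cases "x \<le> y") (auto simp: dist_real_def)
  qed
qed

lemma einterval_inf: "einterval (ereal x) \<infinity> = {x<..}"
  by (auto simp: einterval_def)

lemma phi_tail_int:
  assumes "0 \<le> x"
  shows "set_integrable lborel {x<..} (\<lambda>u. u * phi u) \<and> (LINT u:{x<..}|lborel. u * phi u) = phi x"
proof -
  have D: "((\<lambda>u. - phi u) has_real_derivative u * phi u) (at u)" for u
    unfolding std_normal_density_def
    by (auto intro!: derivative_eq_intros simp: field_simps power2_eq_square)
  have L: "((\<lambda>u. - phi u) \<longlongrightarrow> 0) at_top"
    unfolding std_normal_density_def by real_asymp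
  have C: "isCont (\<lambda>u. - phi u) x"
      unfolding std_normal_density_def by (auto intro!: continuous_intros)
  have a1: "ereal x < \<infinity>" by simp
  have a2: "\<And>u. ereal x < ereal u \<Longrightarrow> ereal u < \<infinity> \<Longrightarrow> ((\<lambda>u. - phi u) has_real_derivative u * phi u) (at u)"
      using D by auto
  have a3: "\<And>u. ereal x < ereal u \<Longrightarrow> ereal u < \<infinity> \<Longrightarrow> isCont (\<lambda>u. u * phi u) u"
      unfolding std_normal_density_def by (auto intro!: continuous_intros)
  have a4: "AE u in lborel. ereal x < ereal u \<longrightarrow> ereal u < \<infinity> \<longrightarrow> 0 \<le> u * phi u"
      using assms by auto
  have a5: "(((\<lambda>u. - phi u) \<circ> real_of_ereal) \<longlongrightarrow> - phi x) (at_right (ereal x))"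
      unfolding ereal_tendsto_simps using C by (simp add: isCont_def filterlim_at_split)
  have a6: "(((\<lambda>u. - phi u) \<circ> real_of_ereal) \<longlongrightarrow> 0) (at_left \<infinity>)"
      unfolding ereal_tendsto_simps using L by simp
  note * = interval_integral_FTC_nonneg[OF a1 a2 a3 a4 a5 a6]
  then show ?thesis unfolding einterval_inf interval_integral_to_infinity_eq by simp
qed


lemma tail_upper:
  assumes "0 < x"
  shows "1 - Phi x \<le> phi x / x"
proof -
  have si: "set_integrable lborel {x<..} phi"
    unfolding set_integrable_def using phi_ind_int[of "{x<..}"] by simp
  have "1 - Phi x = (LINT u:{x<..}|lborel. phi u)"
    unfolding Phi_tail set_lebesgue_integral_def by simp
  also have "\<dots> \<le> (LINT u:{x<..}|lborel. (1/x) * (u * phi u))"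
  proof (rule set_integral_mono[OF si])
    show "set_integrable lborel {x<..} (\<lambda>u. 1 / x * (u * phi u))"
      using phi_tail_int[of x] assms by (intro set_integrable_mult_right) auto
    fix u assume "u \<in> {x<..}"
    then have "1 \<le> u / x" using assms by auto
    then have "1 * phi u \<le> (u/x) * phi u" by (intro mult_right_mono) auto
    then show "phi u \<le> 1 / x * (u * phi u)" by simp
  qed
  also have "\<dots> = (1/x) * phi x"
    using phi_tail_int[of x] assms by (subst set_integral_mult_right) auto
  finally show ?thesis by simp
qed

lemma phi_tail_int2:
  assumes "2 \<le> x"
  shows "set_integrable lborel {x<..} (\<lambda>u. phi u * (1 - 3 / u^4)) \<and>
     (LINT u:{x<..}|lborel. phi u * (1 - 3 / u^4)) = phi x * (1/x - 1/x^3)"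
proof -
  let ?F = "\<lambda>u. - (phi u * (1/u - 1/u^3))"
  have D0: "((\<lambda>u. - (exp (- u\<^sup>2 / 2) * (1/u - 1/u^3))) has_real_derivative exp (- u\<^sup>2 / 2) * (1 - 3 / u^4)) (at u)" if "u \<noteq> 0" for u
  proof -
    have "((\<lambda>u. - (exp (- u\<^sup>2 / 2) * (1/u - 1/u^3))) has_real_derivative
       - (exp (- u\<^sup>2 / 2) * (- (2 * u) / 2) * (1/u - 1/u^3) + exp (- u\<^sup>2 / 2) * (- 1/u^2 + 3/u^4))) (at u)"
      using that by (auto intro!: derivative_eq_intros simp: field_simps power2_eq_square power3_eq_cube power4_eq_xxxx)
    moreover have "- (exp (- u\<^sup>2 / 2) * (- (2 * u) / 2) * (1/u - 1/u^3) + exp (- u\<^sup>2 / 2) * (- 1/u^2 + 3/u^4))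
        = exp (- u\<^sup>2 / 2) * (1 - 3 / u^4)"
      using that by (simp add: field_simps power2_eq_square power3_eq_cube power4_eq_xxxx)
    ultimately show ?thesis by simp
  qed
  have D: "(?F has_real_derivative phi u * (1 - 3 / u^4)) (at u)" if "u \<noteq> 0" for u
  proof -
    have e1: "?F = (\<lambda>u. 1 / sqrt (2*pi) * (- (exp (- u\<^sup>2 / 2) * (1/u - 1/u^3))))"
      by (simp add: fun_eq_iff std_normal_density_def)
    have e2: "phi u * (1 - 3 / u^4) = 1 / sqrt (2*pi) * (exp (- u\<^sup>2 / 2) * (1 - 3 / u^4))"
      by (simp add: std_normal_density_def)
    show ?thesis unfolding e1 e2 by (rule DERIV_cmult[OF D0[OF that]])
  qed
  have L: "(?F \<longlongrightarrow> 0) at_top"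
    unfolding std_normal_density_def by real_asymp
  have C: "isCont ?F x"
      unfolding std_normal_density_def using assms by (auto intro!: continuous_intros)
  have a1: "ereal x < \<infinity>" by simp
  have a2: "\<And>u. ereal x < ereal u \<Longrightarrow> ereal u < \<infinity> \<Longrightarrow> (?F has_real_derivative phi u * (1 - 3 / u^4)) (at u)"
      using D assms by auto
  have a3: "\<And>u. ereal x < ereal u \<Longrightarrow> ereal u < \<infinity> \<Longrightarrow> isCont (\<lambda>u. phi u * (1 - 3 / u^4)) u"
      unfolding std_normal_density_def using assms by (auto intro!: continuous_intros)
  have a4: "AE u in lborel. ereal x < ereal u \<longrightarrow> ereal u < \<infinity> \<longrightarrow> 0 \<le> phi u * (1 - 3 / u^4)"
  proof (intro AE_I2 impI)
    fix u assume "ereal x < ereal u"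
    then have u: "2 \<le> u" using assms by auto
    have "(2::real)^4 \<le> u^4" using u by (intro power_mono) auto
    then have "3 / u^4 \<le> 1" using u by (auto simp: field_simps)
    then show "0 \<le> phi u * (1 - 3 / u^4)" by auto
  qed
  have a5: "((?F \<circ> real_of_ereal) \<longlongrightarrow> ?F x) (at_right (ereal x))"
      unfolding ereal_tendsto_simps using C by (simp add: isCont_def filterlim_at_split)
  have a6: "((?F \<circ> real_of_ereal) \<longlongrightarrow> 0) (at_left \<infinity>)"
      unfolding ereal_tendsto_simps using L by simp
  note * = interval_integral_FTC_nonneg[OF a1 a2 a3 a4 a5 a6]
  then show ?thesis unfolding einterval_inf interval_integral_to_infinity_eq by simp
qed

lemma tail_lower:
  assumes "2 \<le> x"
  shows "phi x * (1/x - 1/x^3) \<le> 1 - Phi x"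
proof -
  have si: "set_integrable lborel {x<..} phi"
    unfolding set_integrable_def using phi_ind_int[of "{x<..}"] by simp
  have "phi x * (1/x - 1/x^3) = (LINT u:{x<..}|lborel. phi u * (1 - 3 / u^4))"
    using phi_tail_int2[OF assms] by simp
  also have "\<dots> \<le> (LINT u:{x<..}|lborel. phi u)"
  proof (rule set_integral_mono[OF _ si])
    show "set_integrable lborel {x<..} (\<lambda>u. phi u * (1 - 3 / u^4))"
      using phi_tail_int2[OF assms] by simp
    fix u assume "u \<in> {x<..}"
    then have "0 \<le> 3 / u^4" using assms by auto
    then show "phi u * (1 - 3 / u^4) \<le> phi u"
      by (simp add: mult_left_le)
  qed
  also have "\<dots> = 1 - Phi x"
    unfolding Phi_tail set_lebesgue_integral_def by simp
  finally show ?thesis .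
qed

lemma phi_pos: "0 < phi x" unfolding std_normal_density_def by simp

lemma Phi_le_half: "x \<le> 0 \<Longrightarrow> Phi x \<le> 1/2"
  using Phi_mono[of x 0] Phi_0 by simp

lemma Phi_big:
  assumes "p < 1"
  shows "p < Phi (2 / (1 - p))"
proof -
  let ?x = "2 / (1 - p)"
  have x0: "0 < ?x" using assms by simp
  have "1 - Phi ?x \<le> phi ?x / ?x" by (rule tail_upper[OF x0])
  also have "\<dots> \<le> 1 / ?x" using phi_le[of ?x] x0 by (intro divide_right_mono) auto
  also have "\<dots> = (1 - p) / 2" by simp
  also have "\<dots> < 1 - p" using assms by simp
  finally show ?thesis by simp
qed

context
  fixes p :: real
  assumes p: "1/2 < p" "p < 1"
begin

lemma Phi_inv_set_ne: "{x. p \<le> Phi x} \<noteq> {}"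
  using Phi_big[of p] p by (auto intro!: exI[of _ "2 / (1 - p)"])

lemma Phi_inv_set_pos: "x \<in> {x. p \<le> Phi x} \<Longrightarrow> 0 < x"
  using Phi_le_half[of x] p by force

lemma Phi_inv_bdd: "bdd_below {x. p \<le> Phi x}"
  using Phi_inv_set_pos by (auto intro!: bdd_belowI[of _ 0] less_imp_le)

lemma Phi_inv_le: "p \<le> Phi y \<Longrightarrow> Phi_inv p \<le> y"
  unfolding Phi_inv_def by (rule cInf_lower[OF _ Phi_inv_bdd]) auto

lemma Phi_inv_nonneg: "0 \<le> Phi_inv p"
  unfolding Phi_inv_def using Phi_inv_set_ne Phi_inv_set_pos
  by (intro cInf_greatest) (auto intro: less_imp_le)

lemma Phi_Phi_inv: "Phi (Phi_inv p) = p"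
proof -
  let ?z = "Phi_inv p"
  have ge: "p \<le> Phi ?z"
  proof (rule ccontr)
    assume "\<not> p \<le> Phi ?z"
    then have d: "0 < p - Phi ?z" by simp
    have "Inf {x. p \<le> Phi x} < ?z + (p - Phi ?z)" using d unfolding Phi_inv_def by simp
    then obtain y where y: "p \<le> Phi y" "y < ?z + (p - Phi ?z)"
      using Phi_inv_set_ne by (subst (asm) cInf_less_iff[OF Phi_inv_set_ne Phi_inv_bdd]) auto
    have "?z \<le> y" using Phi_inv_le y(1) .
    then have "Phi y - Phi ?z \<le> y - ?z" by (rule Phi_lip)
    then show False using y by simp
  qed
  have le: "Phi ?z \<le> p"
  proof (rule ccontr)
    assume "\<not> Phi ?z \<le> p"
    then have d: "0 < (Phi ?z - p) / 2" by simp
    let ?y = "?z - (Phi ?z - p) / 2"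
    have "Phi ?z - Phi ?y \<le> ?z - ?y" using d by (intro Phi_lip) auto
    then have "p \<le> Phi ?y" using d by (simp add: field_simps)
    then have "?z \<le> ?y" by (rule Phi_inv_le)
    then show False using d by simp
  qed
  show ?thesis using ge le by simp
qed

end

lemma sqrt_diff_le: 
  assumes "0 \<le> a" "0 \<le> b"
  shows "\<bar>sqrt a - sqrt b\<bar> \<le> sqrt \<bar>a - b\<bar>"
proof -
  have *: "sqrt x - sqrt y \<le> sqrt (x - y)" if "0 \<le> y" "y \<le> x" for x y :: real
  proof -
    have "sqrt x = sqrt (y + (x - y))" by simp
    also have "\<dots> \<le> sqrt y + sqrt (x - y)" using that by (intro sqrt_add_le_add_sqrt) auto
    finally show ?thesis by simp
  qed
  show ?thesis
  proof (cases "b \<le> a")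
    case True
    then show ?thesis using *[of b a] assms real_sqrt_le_mono[of b a] by auto
  next
    case False
    then show ?thesis using *[of a b] assms real_sqrt_le_mono[of a b] by auto
  qed
qed

lemma ln_le_half: "0 < (x::real) \<Longrightarrow> ln x \<le> x / 2"
proof -
  assume x: "0 < x"
  have "ln x = 2 * ln (sqrt x)" using x by (simp add: ln_sqrt)
  also have "\<dots> \<le> 2 * (sqrt x - 1)" using x ln_le_minus_one[of "sqrt x"] by simp
  also have "\<dots> \<le> x / 2"
  proof -
    have "0 \<le> (sqrt x - 2)^2" by simp
    then have "0 \<le> x - 4 * sqrt x + 4" using x by (simp add: power2_eq_square algebra_simps)
    then show ?thesis by simp
  qed
  finally show ?thesis .
qed

definition q2 :: real where "q2 = phi 2 * (1/2 - 1/8)"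

lemma q2_pos: "0 < q2" unfolding q2_def using phi_pos[of 2] by simp

lemma quantile_asym:
  assumes q0: "0 < q" and qa: "q < q2" and qb: "q \<le> 1 / (8 * pi)"
  defines "L \<equiv> ln (1 / q^2)"
  shows "\<bar>Phi_inv (1 - q) - sqrt (L - ln L - ln (2 * pi))\<bar> \<le> 2"
proof -
  have q1: "q < 1/2"
  proof -
    have "q * (8*pi) \<le> 1" using qb pi_gt3 by (simp add: field_simps)
    moreover have "q * 24 \<le> q * (8*pi)" using q0 pi_gt3 by (intro mult_left_mono) auto
    ultimately show ?thesis by linarith
  qed
  let ?p = "1 - q"
  have p: "1/2 < ?p" "?p < 1" using q0 q1 by auto
  define z where "z = Phi_inv ?p"
  have Tz: "1 - Phi z = q" using Phi_Phi_inv[OF p] unfolding z_def by simp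
  have z2: "2 \<le> z"
  proof (rule ccontr)
    assume "\<not> 2 \<le> z"
    then have "Phi z \<le> Phi 2" by (intro Phi_mono) auto
    moreover have "q2 \<le> 1 - Phi 2" unfolding q2_def using tail_lower[of 2] by simp
    ultimately show False using Tz qa by simp
  qed
  have zpos: "0 < z" using z2 by simp
  have up: "q \<le> phi z / z" using tail_upper[OF zpos] Tz by simp
  have "phi z / (2 * z) \<le> phi z * (1/z - 1/z^3)"
  proof -
    have "4 \<le> z^2" using z2 power_mono[of 2 z 2] by simp
    then have "1 / (2*z) \<le> 1/z - 1/z^3" using zpos by (simp add: field_simps power2_eq_square power3_eq_cube)
    then show ?thesis using phi_pos[of z] mult_left_mono[of "1 / (2*z)" "1/z - 1/z^3" "phi z"] by simp
  qed
  then have lo: "phi z / (2 * z) \<le> q" using tail_lower[OF z2] Tz by simp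
  have lnphi: "ln (phi z) = -(z^2) / 2 - ln (2 * pi) / 2"
    unfolding std_normal_density_def using pi_gt3
    by (simp add: ln_mult ln_div ln_sqrt)
  have lnq_up: "ln q \<le> ln (phi z) - ln z"
  proof -
    have "ln q \<le> ln (phi z / z)" using up q0 zpos phi_pos[of z] by simp
    then show ?thesis using zpos phi_pos[of z] by (simp add: ln_div)
  qed
  have lnq_lo: "ln (phi z) - ln 2 - ln z \<le> ln q"
  proof -
    have "ln (phi z / (2 * z)) \<le> ln q" using lo q0 zpos phi_pos[of z] by simp
    then show ?thesis using zpos phi_pos[of z] by (simp add: ln_div ln_mult)
  qed
  have Leq: "L = - 2 * ln q" unfolding L_def using q0 by (simp add: ln_div ln_powr power2_eq_square ln_mult)
  define lz where "lz = ln z"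
  have U: "z^2 \<le> L - ln (2*pi) - 2 * lz" using lnq_up lnphi Leq lz_def by simp
  have Lo: "L - ln (2*pi) - 2 * lz - 2 * ln 2 \<le> z^2" using lnq_lo lnphi Leq lz_def by simp
  have lz0: "ln 2 \<le> lz" unfolding lz_def using z2 by simp
  have ln2: "0 < ln (2::real)" "ln (2::real) \<le> 1" using ln_le_minus_one[of 2] by auto
  have lzb: "lz \<le> z^2 / 4"
  proof -
    have "lz \<le> z - 1" unfolding lz_def using ln_le_minus_one zpos by simp
    also have "\<dots> \<le> z^2/4" using power2_eq_square[of "z-2"] zero_le_power2[of "z - 2"]
      by (simp add: power2_eq_square algebra_simps)
    finally show ?thesis .
  qed
  have l2pi: "0 < ln (2*pi)" using pi_gt3 by simp
  have l8pi: "ln (8*pi) = 2 * ln 2 + ln (2*pi)"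
  proof -
    have "ln (8*pi) = ln (4 * (2*pi))" by simp
    also have "\<dots> = ln 4 + ln (2*pi)" using pi_gt3 by (subst ln_mult) auto
    also have "ln (4::real) = 2 * ln 2"
      using ln_realpow[of 2 2] by simp
    finally show ?thesis by simp
  qed
  have Lbig: "2 * ln (8*pi) \<le> L"
  proof -
    have "ln q \<le> ln (1 / (8*pi))" using qb q0 by simp
    then show ?thesis using Leq pi_gt3 by (simp add: ln_div)
  qed
  have Lpos: "0 < L" using Lbig l8pi l2pi ln2 by linarith
  have zL: "z^2 \<le> L" using U lz0 ln2 l2pi by linarith
  have zL3: "L / 3 \<le> z^2" using Lo lzb Lbig l8pi by linarith
  have z2pos: "0 < z^2" using zpos by simp
  have lnz2: "ln (z^2) = 2 * lz" unfolding lz_def using zpos by (simp add: ln_realpow)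
  have A1: "2 * lz \<le> ln L" using zL z2pos lnz2 by (metis ln_le_cancel_iff Lpos)
  have A2: "ln L - ln 3 \<le> 2 * lz"
  proof -
    have "ln (L / 3) \<le> ln (z^2)" using zL3 Lpos z2pos by simp
    then show ?thesis using Lpos lnz2 by (simp add: ln_div)
  qed
  have ln3: "ln (3::real) \<le> 2" using ln_le_minus_one[of 3] by simp
  define R where "R = L - ln L - ln (2 * pi)"
  have R0: "0 \<le> R"
  proof -
    have "ln L \<le> L / 2" using ln_le_half Lpos by simp
    then show ?thesis unfolding R_def using Lbig l8pi ln2 l2pi by linarith
  qed
  have D: "\<bar>z^2 - R\<bar> \<le> 2" unfolding R_def using U Lo A1 A2 ln3 ln2 by linarith
  have "\<bar>z - sqrt R\<bar> = \<bar>sqrt (z^2) - sqrt R\<bar>" using zpos by simp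
  also have "\<dots> \<le> sqrt \<bar>z^2 - R\<bar>" using R0 by (intro sqrt_diff_le) auto
  also have "\<dots> \<le> sqrt 4" using D by (intro real_sqrt_le_mono) auto
  also have "\<dots> = 2" by (simp add: real_sqrt_eq_iff[symmetric] ) 
  finally show ?thesis unfolding z_def R_def .
qed

lemma part2:
  "(\<lambda>(a, e). Phi_inv (1 - a / 2 - e)
          - sqrt (ln (4 / (a + 2 * e)\<^sup>2) - ln (ln (4 / (a + 2 * e)\<^sup>2)) - ln (2 * pi)))
        \<in> O[at_right 0 \<times>\<^sub>F at_right 0](\<lambda>_. 1)"
proof (rule bigoI[where c=2])
  define d where "d = min q2 (1 / (8 * pi))"
  have d0: "0 < d" unfolding d_def using q2_pos pi_gt3 by simp
  have ev1: "eventually (\<lambda>a. a \<in> {0<..<d/2}) (at_right (0::real))"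
    using d0 by (intro eventually_at_right_real) auto
  have ev2: "eventually (\<lambda>e. e \<in> {0<..<d/4}) (at_right (0::real))"
    using d0 by (intro eventually_at_right_real) auto
  show "eventually (\<lambda>x. norm ((\<lambda>(a, e). Phi_inv (1 - a / 2 - e)
          - sqrt (ln (4 / (a + 2 * e)\<^sup>2) - ln (ln (4 / (a + 2 * e)\<^sup>2)) - ln (2 * pi))) x)
         \<le> 2 * norm ((\<lambda>_. 1::real) x)) (at_right 0 \<times>\<^sub>F at_right 0)"
    unfolding eventually_prod_filter
  proof (intro exI conjI allI impI, rule ev1, rule ev2)
    fix a e :: real assume a: "a \<in> {0<..<d/2}" and e: "e \<in> {0<..<d/4}"
    define q where "q = (a + 2 * e) / 2"
    have q0: "0 < q" using a e unfolding q_def by auto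
    have qd: "q < d" using a e unfolding q_def by auto
    have e1: "1 - a / 2 - e = 1 - q" unfolding q_def by (simp add: field_simps)
    have e2: "4 / (a + 2 * e)\<^sup>2 = 1 / q^2" unfolding q_def by (simp add: power2_eq_square field_simps)
    have "\<bar>Phi_inv (1 - q) - sqrt (ln (1 / q^2) - ln (ln (1 / q^2)) - ln (2 * pi))\<bar> \<le> 2"
      using qd q0 unfolding d_def by (intro quantile_asym) auto
    then show "norm ((\<lambda>(a, e). Phi_inv (1 - a / 2 - e)
          - sqrt (ln (4 / (a + 2 * e)\<^sup>2) - ln (ln (4 / (a + 2 * e)\<^sup>2)) - ln (2 * pi))) (a, e))
         \<le> 2 * norm ((\<lambda>_. 1::real) (a, e))"
      by (simp only: prod.case e1 e2) simp
  qed
qed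

definition Nm :: "real \<Rightarrow> real \<Rightarrow> real measure" where
  "Nm s a = density lborel (normal_density a s)"

definition Gp :: "real \<Rightarrow> real \<Rightarrow> (nat \<Rightarrow> real) measure" where
  "Gp s a = PiM UNIV (\<lambda>_. Nm s a)"

lemma sets_Nm[measurable_cong, simp]: "sets (Nm s a) = sets borel"
  unfolding Nm_def by simp

lemma space_Nm[simp]: "space (Nm s a) = UNIV"
  unfolding Nm_def by simp

lemma prob_space_Nm: "0 < s \<Longrightarrow> prob_space (Nm s a)"
  unfolding Nm_def by (rule prob_space_normal_density)

lemma sets_Gp[measurable_cong]: "sets (Gp s a) = sets path_space"
  unfolding Gp_def path_space_def by (intro sets_PiM_cong) auto

lemma space_Gp[simp]: "space (Gp s a) = UNIV"
  unfolding Gp_def by (simp add: space_PiM)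

lemma space_path[simp]: "space path_space = UNIV"
  unfolding path_space_def by (simp add: space_PiM)

lemma prob_space_Gp: "0 < s \<Longrightarrow> prob_space (Gp s a)"
  unfolding Gp_def by (intro prob_space_PiM prob_space_Nm)

lemma pps_Gp: "0 < s \<Longrightarrow> product_prob_space (\<lambda>_. Nm s a)"
  unfolding product_prob_space_def product_prob_space_axioms_def product_sigma_finite_def
  using prob_space_Nm[of s a] by (auto intro: prob_space_imp_sigma_finite)

lemma Gp_component: 
  assumes s: "0 < s" shows "distr (Gp s a) (Nm s a) (\<lambda>w. w i) = Nm s a"
proof -
  interpret product_prob_space "\<lambda>_. Nm s a" UNIV using pps_Gp[OF s] .
  show ?thesis unfolding Gp_def by (rule PiM_component) auto
qed

lemma Gp_component_borel: "0 < s \<Longrightarrow> distr (Gp s a) borel (\<lambda>w. w i) = Nm s a"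
proof -
  assume s: "0 < s"
  have "distr (Gp s a) borel (\<lambda>w. w i) = distr (Gp s a) (Nm s a) (\<lambda>w. w i)"
    by (intro distr_cong) auto
  then show ?thesis using Gp_component[OF s] by simp
qed

lemma Gp_indep:
  assumes s: "0 < s"
  shows "prob_space.indep_vars (Gp s a) (\<lambda>_. borel) (\<lambda>i w. w i) UNIV"
proof -
  interpret prob_space "Gp s a" by (rule prob_space_Gp[OF s])
  have rv: "random_variable borel (\<lambda>w. w i)" for i
    by (simp add: measurable_cong_sets[OF sets_Gp refl] path_space_def)
  have "distr (Gp s a) (PiM UNIV (\<lambda>_. borel)) (\<lambda>x. \<lambda>i\<in>UNIV. x i) = Gp s a"
  proof -
    have "(\<lambda>x::nat\<Rightarrow>real. \<lambda>i\<in>UNIV. x i) = (\<lambda>x. x)" by (simp add: fun_eq_iff)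
    then show ?thesis using sets_Gp[of s a] by (simp add: distr_id2 path_space_def)
  qed
  also have "\<dots> = PiM UNIV (\<lambda>i. distr (Gp s a) borel (\<lambda>w. w i))"
    using Gp_component_borel[OF s] by (simp add: Gp_def)
  finally show ?thesis
    by (subst indep_vars_iff_distr_eq_PiM) (auto simp: rv)
qed

lemma natF_gens_sub:
  assumes "space Q = UNIV"
  shows "{(\<lambda>w. w i) -` A \<inter> space Q | i A. i < n \<and> A \<in> sets (borel :: real measure)} \<subseteq> Pow (space Q)"
  by auto

lemma sets_natF:
  assumes "space Q = UNIV"
  shows "sets (natF Q n) = sigma_sets UNIV {(\<lambda>w. w i) -` A | i A. i < n \<and> A \<in> sets (borel :: real measure)}"
  unfolding natF_def using assms by (subst sets_measure_of) auto

lemma space_natF: "space (natF Q n) = space Q"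
  unfolding natF_def by (rule space_measure_of_conv)

lemma subalg_natF:
  assumes sQ: "sets Q = sets path_space"
  shows "subalgebra Q (natF Q n)"
proof -
  have sp: "space Q = UNIV" using sets_eq_imp_space_eq[OF sQ] by simp
  have "sigma_sets UNIV {(\<lambda>w. w i) -` A | i A. i < n \<and> A \<in> sets (borel :: real measure)} \<subseteq> sets Q"
  proof (rule sets.sigma_sets_subset'[of _ Q, unfolded sp])
    show "{(\<lambda>w. w i) -` A | i A. i < n \<and> A \<in> sets (borel :: real measure)} \<subseteq> sets Q"
    proof safe
      fix i and A :: "real set" assume "A \<in> sets borel"
      have "(\<lambda>w::nat\<Rightarrow>real. w i) \<in> measurable Q borel"
        by (simp add: measurable_cong_sets[OF sQ refl] path_space_def)
      then have "(\<lambda>w::nat\<Rightarrow>real. w i) -` A \<inter> space Q \<in> sets Q" using \<open>A \<in> sets borel\<close> by measurable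
      then show "(\<lambda>w::nat\<Rightarrow>real. w i) -` A \<in> sets Q" using sp by simp
    qed
    show "UNIV \<in> sets Q" using sets.top[of Q] sp by simp
  qed
  then show ?thesis unfolding subalgebra_def using sets_natF[OF sp] space_natF by auto
qed

lemma natF_restrict:
  assumes sp: "space Q = UNIV" and A: "A \<in> sets (natF Q n)"
  shows "\<exists>C \<in> sets (PiM {..<n} (\<lambda>_. borel :: real measure)). A = (\<lambda>w. restrict w {..<n}) -` C"
proof -
  let ?R = "\<lambda>w::nat\<Rightarrow>real. restrict w {..<n}"
  let ?V = "vimage_algebra UNIV ?R (PiM {..<n} (\<lambda>_. borel :: real measure))"
  have sV: "sets ?V = {?R -` C \<inter> UNIV | C. C \<in> sets (PiM {..<n} (\<lambda>_. borel :: real measure))}"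
    by (intro sets_vimage_algebra2) (auto simp: space_PiM)
  have "sigma_sets UNIV {(\<lambda>w. w i) -` B | i B. i < n \<and> B \<in> sets (borel :: real measure)} \<subseteq> sets ?V"
  proof (rule sets.sigma_sets_subset'[of _ ?V, simplified])
    show "{(\<lambda>w. w i) -` B | i B. i < n \<and> B \<in> sets (borel :: real measure)} \<subseteq> sets ?V"
    proof safe
      fix i and B :: "real set" assume i: "i < n" and B: "B \<in> sets borel"
      let ?C = "{r \<in> space (PiM {..<n} (\<lambda>_. borel :: real measure)). r i \<in> B}"
      have "?C \<in> sets (PiM {..<n} (\<lambda>_. borel :: real measure))"
        using i B by (intro sets_Collect_single) auto
      moreover have "(\<lambda>w. w i) -` B = ?R -` ?C \<inter> UNIV" using i by (auto simp: space_PiM)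
      ultimately show "(\<lambda>w. w i) -` B \<in> sets ?V" unfolding sV by blast
    qed
    show "UNIV \<in> sets ?V" using sets.top[of ?V] by simp
  qed
  then have "A \<in> sets ?V" using A sets_natF[OF sp] by auto
  then show ?thesis unfolding sV by auto
qed

lemma Gp_fms: "0 < s \<Longrightarrow> sigma_finite_subalgebra (Gp s a) (natF (Gp s a) k)"
proof -
  assume s: "0 < s"
  interpret prob_space "Gp s a" by (rule prob_space_Gp[OF s])
  have "finite_measure_subalgebra (Gp s a) (natF (Gp s a) k)"
    unfolding finite_measure_subalgebra_def finite_measure_subalgebra_axioms_def
    using subalg_natF[OF sets_Gp] finite_measure_axioms by auto
  then show ?thesis by (rule finite_measure_subalgebra_is_sigma_finite)
qed

lemma Gp_condexp:
  assumes s: "0 < s" and h[measurable]: "h \<in> borel_measurable borel"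
    and int: "integrable (Gp s a) (\<lambda>w. h (w k))"
  shows "AE w in Gp s a. real_cond_exp (Gp s a) (natF (Gp s a) k) (\<lambda>w. h (w k)) w = (\<integral>w. h (w k) \<partial>Gp s a)"
proof -
  let ?G = "Gp s a"
  let ?c = "\<integral>w. h (w k) \<partial>Gp s a"
  interpret prob_space ?G by (rule prob_space_Gp[OF s])
  interpret sigma_finite_subalgebra ?G "natF ?G k" by (rule Gp_fms[OF s])
  have sub: "sets (natF ?G k) \<subseteq> sets ?G" using subalg_natF[OF sets_Gp] unfolding subalgebra_def by auto
  have ind0: "indep_var (PiM {..<k} (\<lambda>_. borel)) (\<lambda>\<omega>. restrict (\<lambda>i. \<omega> i) {..<k})
                        (PiM {k} (\<lambda>_. borel)) (\<lambda>\<omega>. restrict (\<lambda>i. \<omega> i) {k})"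
    by (rule indep_var_restrict[OF Gp_indep[OF s]]) auto
  show ?thesis
  proof (rule real_cond_exp_charact)
    fix A assume A: "A \<in> sets (natF ?G k)"
    then have AG: "A \<in> sets ?G" using sub by auto
    obtain C where C: "C \<in> sets (PiM {..<k} (\<lambda>_. borel :: real measure))"
       and AC: "A = (\<lambda>w. restrict w {..<k}) -` C"
      using natF_restrict[OF space_Gp A] by blast
    have ind: "indep_var borel (indicator C \<circ> (\<lambda>\<omega>. restrict (\<lambda>i. \<omega> i) {..<k}))
                         borel ((\<lambda>r. h (r k)) \<circ> (\<lambda>\<omega>. restrict (\<lambda>i. \<omega> i) {k}))"
      by (rule indep_var_compose[OF ind0]) (use C in auto)
    have e1: "(indicator C \<circ> (\<lambda>\<omega>. restrict (\<lambda>i. \<omega> i) {..<k})) = (indicator A :: _ \<Rightarrow> real)"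
      unfolding AC by (auto simp: fun_eq_iff indicator_def)
    have e2: "((\<lambda>r. h (r k)) \<circ> (\<lambda>\<omega>. restrict (\<lambda>i. \<omega> i) {k})) = (\<lambda>w. h (w k))"
      by (auto simp: fun_eq_iff)
    have ind': "indep_var borel (indicator A :: _ \<Rightarrow> real) borel (\<lambda>w. h (w k))"
      using ind unfolding e1 e2 .
    have intA: "integrable ?G (indicator A :: _ \<Rightarrow> real)"
      using AG by (intro integrable_real_indicator) (auto simp: emeasure_eq_measure)
    have "(LINT x:A|?G. h (x k)) = (\<integral>x. indicator A x * h (x k) \<partial>?G)"
      unfolding set_lebesgue_integral_def by simp
    also have "\<dots> = (\<integral>x. indicator A x \<partial>?G) * ?c"
      by (rule indep_var_lebesgue_integral[OF ind' intA int])
    also have "\<dots> = (\<integral>x. indicator A x * ?c \<partial>?G)" by simp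
    also have "\<dots> = (LINT x:A|?G. ?c)"
      unfolding set_lebesgue_integral_def by simp
    finally show "(LINT x:A|?G. h (x k)) = (LINT x:A|?G. ?c)" .
  qed (auto simp: int)
qed

lemma Gp_coord_meas[measurable]: "(\<lambda>w. w i) \<in> measurable (Gp s a) borel"
  by (simp add: measurable_cong_sets[OF sets_Gp refl] path_space_def)

lemma Gp_integral:
  assumes s: "0 < s" and h[measurable]: "h \<in> borel_measurable borel"
  shows "integrable (Gp s a) (\<lambda>w. h (w i)) \<longleftrightarrow> integrable lborel (\<lambda>x. normal_density a s x * h x)"
    and "(\<integral>w. h (w i) \<partial>Gp s a) = (\<integral>x. normal_density a s x * h x \<partial>lborel)"
proof -
  have "integrable (Gp s a) (\<lambda>w. h (w i)) \<longleftrightarrow> integrable (distr (Gp s a) borel (\<lambda>w. w i)) h"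
    by (rule integrable_distr_eq[symmetric]) auto
  also have "\<dots> \<longleftrightarrow> integrable lborel (\<lambda>x. normal_density a s x * h x)"
    unfolding Gp_component_borel[OF s] Nm_def by (subst integrable_density) auto
  finally show "integrable (Gp s a) (\<lambda>w. h (w i)) \<longleftrightarrow> integrable lborel (\<lambda>x. normal_density a s x * h x)" .
  have "(\<integral>w. h (w i) \<partial>Gp s a) = integral\<^sup>L (distr (Gp s a) borel (\<lambda>w. w i)) h"
    by (rule integral_distr[symmetric]) auto
  also have "\<dots> = (\<integral>x. normal_density a s x * h x \<partial>lborel)"
    unfolding Gp_component_borel[OF s] Nm_def by (subst integral_density) auto
  finally show "(\<integral>w. h (w i) \<partial>Gp s a) = (\<integral>x. normal_density a s x * h x \<partial>lborel)" .
qed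

lemma Gp_in_Qsig:
  assumes s: "0 < s"
  shows "in_Qsig s (Gp s a) a"
  unfolding in_Qsig_def
proof (intro conjI allI impI)
  show "prob_space (Gp s a)" by (rule prob_space_Gp[OF s])
  show "sets (Gp s a) = sets path_space" by (rule sets_Gp)
  fix t :: nat
  have m2: "has_bochner_integral lborel (\<lambda>x. normal_density a s x * (x - a)^2) (s^2)"
    using normal_moment_even[OF s, where k=1 and \<mu>=a] by (simp add: power2_eq_square)
  have m1: "has_bochner_integral lborel (\<lambda>x. normal_density a s x * x) a"
    using normal_moment_nz_1[OF s] .
  have m0: "integrable lborel (\<lambda>x. normal_density a s x)"
    using integrable_normal_density[OF s] .
  have i2: "integrable lborel (\<lambda>x. normal_density a s x * (x - a)^2)"
    using m2 by (rule integrable.intros)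
  have i1: "integrable lborel (\<lambda>x. normal_density a s x * x)"
    using m1 by (rule integrable.intros)
  have ix2: "integrable lborel (\<lambda>x. normal_density a s x * x^2)"
  proof -
    have "integrable lborel (\<lambda>x. normal_density a s x * (x - a)^2 + 2 * a * (normal_density a s x * x) - a^2 * normal_density a s x)"
      using i2 i1 m0 by (intro Bochner_Integration.integrable_diff Bochner_Integration.integrable_add integrable_mult_right) auto
    moreover have "(\<lambda>x. normal_density a s x * (x - a)^2 + 2 * a * (normal_density a s x * x) - a^2 * normal_density a s x)
        = (\<lambda>x. normal_density a s x * x^2)"
      by (auto simp: fun_eq_iff power2_eq_square algebra_simps)
    ultimately show ?thesis by simp
  qed
  show "integrable (Gp s a) (\<lambda>w. (w (t - 1))\<^sup>2)"
    using Gp_integral(1)[OF s, where h="\<lambda>x. x^2" and i="t - 1" and a=a] ix2 by simp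
  have int1: "integrable (Gp s a) (\<lambda>w. w (t - 1))"
    using Gp_integral(1)[OF s, where h="\<lambda>x. x" and i="t - 1" and a=a] m1 by (auto intro: integrable.intros)
  have "AE w in Gp s a. real_cond_exp (Gp s a) (natF (Gp s a) (t - 1)) (\<lambda>w. w (t - 1)) w = (\<integral>w. w (t - 1) \<partial>Gp s a)"
    using Gp_condexp[OF s, where h="\<lambda>x. x" and k="t - 1" and a=a] int1 by simp
  moreover have "(\<integral>w. w (t - 1) \<partial>Gp s a) = a"
    using Gp_integral(2)[OF s, where h="\<lambda>x. x" and i="t - 1" and a=a] m1 by (simp add: has_bochner_integral_integral_eq)
  ultimately show "AE w in Gp s a. real_cond_exp (Gp s a) (natF (Gp s a) (t - 1)) (\<lambda>w. w (t - 1)) w = a"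
    by simp
  have int2: "integrable (Gp s a) (\<lambda>w. (w (t - 1) - a)^2)"
    using Gp_integral(1)[OF s, where h="\<lambda>x. (x - a)^2" and i="t - 1" and a=a] m2 by (auto intro: integrable.intros)
  have "AE w in Gp s a. real_cond_exp (Gp s a) (natF (Gp s a) (t - 1)) (\<lambda>w. (w (t - 1) - a)^2) w = (\<integral>w. (w (t - 1) - a)^2 \<partial>Gp s a)"
    using Gp_condexp[OF s, where h="\<lambda>x. (x - a)^2" and k="t - 1" and a=a] int2 by simp
  moreover have "(\<integral>w. (w (t - 1) - a)^2 \<partial>Gp s a) = s^2"
    using Gp_integral(2)[OF s, where h="\<lambda>x. (x - a)^2" and i="t - 1" and a=a] m2 by (simp add: has_bochner_integral_integral_eq)
  ultimately show "AE w in Gp s a. real_cond_exp (Gp s a) (natF (Gp s a) (t - 1)) (\<lambda>w. (w (t - 1) - a)\<^sup>2) w \<le> s\<^sup>2"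
    by (auto elim: AE_mp)
qed

definition gd :: "real \<Rightarrow> real \<Rightarrow> nat \<Rightarrow> (nat \<Rightarrow> real) \<Rightarrow> real" where
  "gd s m t x = (\<Prod>i<t. normal_density m s (x i))"

lemma gd_nonneg: "0 \<le> gd s m t x" unfolding gd_def by (intro prod_nonneg) auto

lemma gd_meas[measurable]: "gd s m t \<in> borel_measurable (PiM {..<t} (\<lambda>_. lborel))"
  unfolding gd_def
proof (intro borel_measurable_prod)
  fix i assume "i \<in> {..<t}"
  then have "(\<lambda>x::nat\<Rightarrow>real. x i) \<in> measurable (PiM {..<t} (\<lambda>_. lborel)) lborel"
    by (rule measurable_component_singleton)
  then have "(\<lambda>x::nat\<Rightarrow>real. x i) \<in> measurable (PiM {..<t} (\<lambda>_. lborel)) borel"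
    by simp
  from measurable_compose[OF this borel_measurable_normal_density]
  show "(\<lambda>x. normal_density m s (x i)) \<in> borel_measurable (PiM {..<t} (\<lambda>_. lborel))" .
qed

lemma PiM_Nm_density:
  assumes s: "0 < s"
  shows "PiM {..<t} (\<lambda>_. Nm s m) = density (PiM {..<t} (\<lambda>_. lborel)) (\<lambda>x. ennreal (gd s m t x))"
proof -
  interpret N: product_sigma_finite "\<lambda>_. Nm s m"
    unfolding product_sigma_finite_def using prob_space_Nm[OF s] by (auto intro: prob_space_imp_sigma_finite)
  interpret L: product_sigma_finite "\<lambda>_::nat. lborel :: real measure"
    unfolding product_sigma_finite_def by (auto intro: lborel.sigma_finite_measure_axioms)
  show ?thesis
  proof (rule N.PiM_eqI[symmetric])
    show "finite {..<t}" by simp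
    show "sets (density (PiM {..<t} (\<lambda>_. lborel)) (\<lambda>x. ennreal (gd s m t x))) = sets (PiM {..<t} (\<lambda>_. Nm s m))"
      by (simp, intro sets_PiM_cong) auto
    fix A assume A: "\<And>i. i \<in> {..<t} \<Longrightarrow> A i \<in> sets (Nm s m)"
    then have A': "\<And>i. i \<in> {..<t} \<Longrightarrow> A i \<in> sets borel" by simp
    have "emeasure (density (PiM {..<t} (\<lambda>_. lborel)) (\<lambda>x. ennreal (gd s m t x))) (PiE {..<t} A)
        = (\<integral>\<^sup>+ x. ennreal (gd s m t x) * indicator (PiE {..<t} A) x \<partial>PiM {..<t} (\<lambda>_. lborel))"
      using A' by (intro emeasure_density) (auto intro!: sets_PiM_I_finite)
    also have "\<dots> = (\<integral>\<^sup>+ x. (\<Prod>i<t. ennreal (normal_density m s (x i)) * indicator (A i) (x i)) \<partial>PiM {..<t} (\<lambda>_. lborel))"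
    proof (intro nn_integral_cong)
      fix x assume x: "x \<in> space (PiM {..<t} (\<lambda>_. lborel :: real measure))"
      have "indicator (PiE {..<t} A) x = (\<Prod>i<t. indicator (A i) (x i) :: ennreal)"
        using x by (auto simp: space_PiM indicator_def PiE_iff)
      moreover have "ennreal (gd s m t x) = (\<Prod>i<t. ennreal (normal_density m s (x i)))"
        unfolding gd_def by (subst prod_ennreal) auto
      ultimately show "ennreal (gd s m t x) * indicator (PiE {..<t} A) x = (\<Prod>i<t. ennreal (normal_density m s (x i)) * indicator (A i) (x i))"
        by (simp add: prod.distrib)
    qed
    also have "\<dots> = (\<Prod>i<t. \<integral>\<^sup>+ y. ennreal (normal_density m s y) * indicator (A i) y \<partial>lborel)"
      using A' by (intro L.product_nn_integral_prod) auto
    also have "\<dots> = (\<Prod>i<t. emeasure (Nm s m) (A i))"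
      unfolding Nm_def using A' by (intro prod.cong refl, subst emeasure_density) auto
    finally show "emeasure (density (PiM {..<t} (\<lambda>_. lborel)) (\<lambda>x. ennreal (gd s m t x))) (PiE {..<t} A) = (\<Prod>i<t. emeasure (Nm s m) (A i))" .
  qed
qed

lemma gd_exp:
  "gd s m t x = (1 / sqrt (2 * pi * s\<^sup>2))^t * exp (- (\<Sum>i<t. (x i - m)\<^sup>2) / (2 * s\<^sup>2))"
proof -
  have "gd s m t x = (\<Prod>i<t. (1 / sqrt (2 * pi * s\<^sup>2)) * exp (- (x i - m)\<^sup>2 / (2 * s\<^sup>2)))"
    unfolding gd_def normal_density_def ..
  also have "\<dots> = (1 / sqrt (2 * pi * s\<^sup>2))^t * (\<Prod>i<t. exp (- (x i - m)\<^sup>2 / (2 * s\<^sup>2)))"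
    by (simp only: prod.distrib prod_constant card_lessThan)
  also have "(\<Prod>i<t. exp (- (x i - m)\<^sup>2 / (2 * s\<^sup>2))) = exp (\<Sum>i<t. - (x i - m)\<^sup>2 / (2 * s\<^sup>2))"
    by (simp add: exp_sum)
  also have "(\<Sum>i<t. - (x i - m)\<^sup>2 / (2 * s\<^sup>2)) = - (\<Sum>i<t. (x i - m)\<^sup>2) / (2 * s\<^sup>2)"
    by (simp add: sum_divide_distrib sum_negf)
  finally show ?thesis .
qed

lemma gd_compare:
  assumes s: "0 < s" and ba: "b < a"
  shows "gd s b t x \<le> gd s a t x \<longleftrightarrow> real t * (a + b) / 2 \<le> (\<Sum>i<t. x i)"
proof -
  let ?c = "(1 / sqrt (2 * pi * s\<^sup>2))^t"
  let ?Sa = "\<Sum>i<t. (x i - a)\<^sup>2" and ?Sb = "\<Sum>i<t. (x i - b)\<^sup>2"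
  have c: "0 < ?c" using s by simp
  have k: "0 < 2 * s\<^sup>2" using s by simp
  have "gd s b t x \<le> gd s a t x \<longleftrightarrow> ?c * exp (- ?Sb / (2 * s\<^sup>2)) \<le> ?c * exp (- ?Sa / (2 * s\<^sup>2))"
    by (simp only: gd_exp)
  also have "\<dots> \<longleftrightarrow> exp (- ?Sb / (2 * s\<^sup>2)) \<le> exp (- ?Sa / (2 * s\<^sup>2))"
    using c by (rule mult_le_cancel_left_pos)
  also have "\<dots> \<longleftrightarrow> - ?Sb / (2 * s\<^sup>2) \<le> - ?Sa / (2 * s\<^sup>2)"
    by (rule exp_le_cancel_iff)
  also have "\<dots> \<longleftrightarrow> - ?Sb \<le> - ?Sa"
    using k by (simp only: divide_le_cancel, simp)
  also have "\<dots> \<longleftrightarrow> 0 \<le> ?Sb - ?Sa" by linarith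
  also have "?Sb - ?Sa = (\<Sum>i<t. (a - b) * (2 * x i - (a + b)))"
    by (subst sum_subtractf[symmetric], intro sum.cong refl) (simp add: power2_eq_square algebra_simps)
  also have "\<dots> = (a - b) * (\<Sum>i<t. (2 * x i - (a + b)))"
    by (rule sum_distrib_left[symmetric])
  also have "(\<Sum>i<t. (2 * x i - (a + b))) = 2 * (\<Sum>i<t. x i) - real t * (a + b)"
    by (simp add: sum_subtractf sum_distrib_left[symmetric])
  also have "0 \<le> (a - b) * (2 * (\<Sum>i<t. x i) - real t * (a + b)) \<longleftrightarrow> 0 \<le> 2 * (\<Sum>i<t. x i) - real t * (a + b)"
    using ba by (simp add: zero_le_mult_iff)
  also have "\<dots> \<longleftrightarrow> real t * (a + b) / 2 \<le> (\<Sum>i<t. x i)" by linarith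
  finally show ?thesis .
qed

lemma Gp_restrict_emeasure:
  assumes s: "0 < s" and C: "C \<in> sets (PiM {..<t} (\<lambda>_. borel :: real measure))"
  shows "emeasure (Gp s m) ((\<lambda>w. restrict w {..<t}) -` C) = emeasure (density (PiM {..<t} (\<lambda>_. lborel)) (\<lambda>x. ennreal (gd s m t x))) C"
proof -
  interpret product_prob_space "\<lambda>_. Nm s m" UNIV using pps_Gp[OF s] .
  have "sets (PiM {..<t} (\<lambda>_. Nm s m)) = sets (PiM {..<t} (\<lambda>_. borel :: real measure))"
    by (intro sets_PiM_cong) auto
  then have C': "C \<in> sets (PiM {..<t} (\<lambda>_. Nm s m))" using C by simp
  have "emeasure (Gp s m) ((\<lambda>w. restrict w {..<t}) -` C) = emeasure (PiM UNIV (\<lambda>_. Nm s m)) (prod_emb UNIV (\<lambda>_. Nm s m) {..<t} C)"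
    unfolding Gp_def prod_emb_def by (simp add: space_PiM)
  also have "\<dots> = emeasure (PiM {..<t} (\<lambda>_. Nm s m)) C"
    using C' by (intro emeasure_PiM_emb') auto
  finally show ?thesis using PiM_Nm_density[OF s] by simp
qed

lemma gd_integrable:
  assumes s: "0 < s"
  shows "integrable (PiM {..<t} (\<lambda>_. lborel)) (gd s m t)"
proof (rule integrableI_nonneg)
  show "gd s m t \<in> borel_measurable (PiM {..<t} (\<lambda>_. lborel))" by (rule gd_meas)
  show "AE x in PiM {..<t} (\<lambda>_. lborel). 0 \<le> gd s m t x" by (simp add: gd_nonneg)
  have "(\<integral>\<^sup>+ x. ennreal (gd s m t x) \<partial>PiM {..<t} (\<lambda>_. lborel)) =
        (\<integral>\<^sup>+ x. ennreal (gd s m t x) * indicator (space (PiM {..<t} (\<lambda>_. lborel :: real measure))) x \<partial>PiM {..<t} (\<lambda>_. lborel))"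
    by (intro nn_integral_cong) auto
  also have "\<dots> = emeasure (density (PiM {..<t} (\<lambda>_. lborel)) (\<lambda>x. ennreal (gd s m t x))) (space (PiM {..<t} (\<lambda>_. lborel :: real measure)))"
    by (rule emeasure_density[symmetric]) auto
  also have "\<dots> = emeasure (PiM {..<t} (\<lambda>_. Nm s m)) (space (PiM {..<t} (\<lambda>_. lborel :: real measure)))"
    using PiM_Nm_density[OF s] by simp
  also have "\<dots> < \<infinity>"
  proof -
    interpret prob_space "PiM {..<t} (\<lambda>_. Nm s m)" by (intro prob_space_PiM prob_space_Nm s)
    have "space (PiM {..<t} (\<lambda>_. lborel :: real measure)) = space (PiM {..<t} (\<lambda>_. Nm s m))"
      by (simp add: space_PiM)
    then show ?thesis by (simp add: emeasure_space_1)
  qed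
  finally show "(\<integral>\<^sup>+ x. ennreal (gd s m t x) \<partial>PiM {..<t} (\<lambda>_. lborel)) < \<infinity>" .
qed

lemma Gp_restrict_measure:
  assumes s: "0 < s" and C: "C \<in> sets (PiM {..<t} (\<lambda>_. borel :: real measure))"
  shows "measure (Gp s m) ((\<lambda>w. restrict w {..<t}) -` C) = (\<integral>x. indicator C x * gd s m t x \<partial>PiM {..<t} (\<lambda>_. lborel))"
proof -
  have "sets (PiM {..<t} (\<lambda>_. lborel :: real measure)) = sets (PiM {..<t} (\<lambda>_. borel :: real measure))"
    by (intro sets_PiM_cong) auto
  then have C': "C \<in> sets (PiM {..<t} (\<lambda>_. lborel :: real measure))" using C by simp
  have "emeasure (Gp s m) ((\<lambda>w. restrict w {..<t}) -` C) = (\<integral>\<^sup>+ x. ennreal (gd s m t x) * indicator C x \<partial>PiM {..<t} (\<lambda>_. lborel))"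
    unfolding Gp_restrict_emeasure[OF s C] using C' by (intro emeasure_density) auto
  also have "\<dots> = (\<integral>\<^sup>+ x. ennreal (indicator C x * gd s m t x) \<partial>PiM {..<t} (\<lambda>_. lborel))"
    by (intro nn_integral_cong) (auto simp: indicator_def)
  also have "\<dots> = ennreal (\<integral>x. indicator C x * gd s m t x \<partial>PiM {..<t} (\<lambda>_. lborel))"
    using C' integrable_mult_indicator[OF C' gd_integrable[OF s, of t m]]
    by (intro nn_integral_eq_integral) (auto simp: gd_nonneg)
  finally show ?thesis unfolding measure_def
    by (simp add: integral_nonneg_AE gd_nonneg)
qed

lemma sum_set_meas:
  "{r \<in> space (PiM {..<t} (\<lambda>_. borel :: real measure)). c \<le> (\<Sum>i<t. r i)} \<in> sets (PiM {..<t} (\<lambda>_. borel :: real measure))"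
proof -
  have "(\<lambda>r. \<Sum>i<t. r i) \<in> borel_measurable (PiM {..<t} (\<lambda>_. borel :: real measure))"
    by (intro borel_measurable_sum measurable_component_singleton[where M="\<lambda>_. borel", simplified]) auto
  then show ?thesis by measurable
qed

lemma TV:
  assumes s: "0 < s" and ba: "b < a" and C: "C \<in> sets (PiM {..<t} (\<lambda>_. borel :: real measure))"
  shows "measure (Gp s a) ((\<lambda>w. restrict w {..<t}) -` C) - measure (Gp s b) ((\<lambda>w. restrict w {..<t}) -` C)
    \<le> measure (Gp s a) {w. real t * (a + b) / 2 \<le> (\<Sum>i<t. w i)} - measure (Gp s b) {w. real t * (a + b) / 2 \<le> (\<Sum>i<t. w i)}"
proof -
  let ?P = "PiM {..<t} (\<lambda>_. lborel :: real measure)"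
  let ?D = "{r \<in> space (PiM {..<t} (\<lambda>_. borel :: real measure)). real t * (a + b) / 2 \<le> (\<Sum>i<t. r i)}"
  have D: "?D \<in> sets (PiM {..<t} (\<lambda>_. borel :: real measure))" by (rule sum_set_meas)
  have sP: "sets ?P = sets (PiM {..<t} (\<lambda>_. borel :: real measure))" by (intro sets_PiM_cong) auto
  have CP: "C \<in> sets ?P" and DP: "?D \<in> sets ?P" using C D sP by auto
  have RD: "(\<lambda>w. restrict w {..<t}) -` ?D = {w. real t * (a + b) / 2 \<le> (\<Sum>i<t. w i)}"
    by (auto simp: space_PiM)
  have ia: "integrable ?P (gd s a t)" and ib: "integrable ?P (gd s b t)" using gd_integrable[OF s] by auto
  have "measure (Gp s a) ((\<lambda>w. restrict w {..<t}) -` C) - measure (Gp s b) ((\<lambda>w. restrict w {..<t}) -` C)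
      = (\<integral>x. indicator C x * gd s a t x \<partial>?P) - (\<integral>x. indicator C x * gd s b t x \<partial>?P)"
    using Gp_restrict_measure[OF s C] by simp
  also have "\<dots> = (\<integral>x. indicator C x * (gd s a t x - gd s b t x) \<partial>?P)"
    using integrable_mult_indicator[OF CP ia] integrable_mult_indicator[OF CP ib]
    by (subst Bochner_Integration.integral_diff[symmetric]) (auto simp: algebra_simps)
  also have "\<dots> \<le> (\<integral>x. indicator ?D x * (gd s a t x - gd s b t x) \<partial>?P)"
  proof (rule Bochner_Integration.integral_mono)
    show "integrable ?P (\<lambda>x. indicator C x * (gd s a t x - gd s b t x))"
      using integrable_mult_indicator[OF CP Bochner_Integration.integrable_diff[OF ia ib]] by simp
    show "integrable ?P (\<lambda>x. indicator ?D x * (gd s a t x - gd s b t x))"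
      using integrable_mult_indicator[OF DP Bochner_Integration.integrable_diff[OF ia ib]] by simp
    fix x assume x: "x \<in> space ?P"
    have xs: "x \<in> space (PiM {..<t} (\<lambda>_. borel :: real measure))" using x by (simp add: space_PiM)
    show "indicator C x * (gd s a t x - gd s b t x) \<le> indicator ?D x * (gd s a t x - gd s b t x)"
    proof (cases "gd s b t x \<le> gd s a t x")
      case True
      then have "x \<in> ?D" using gd_compare[OF s ba] xs by auto
      then show ?thesis using True by (auto simp: indicator_def)
    next
      case False
      then have "x \<notin> ?D" using gd_compare[OF s ba] by auto
      then show ?thesis using False by (auto simp: indicator_def)
    qed
  qed
  also have "\<dots> = (\<integral>x. indicator ?D x * gd s a t x \<partial>?P) - (\<integral>x. indicator ?D x * gd s b t x \<partial>?P)"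
    using integrable_mult_indicator[OF DP ia] integrable_mult_indicator[OF DP ib]
    by (subst Bochner_Integration.integral_diff[symmetric]) (auto simp: algebra_simps)
  also have "\<dots> = measure (Gp s a) {w. real t * (a + b) / 2 \<le> (\<Sum>i<t. w i)} - measure (Gp s b) {w. real t * (a + b) / 2 \<le> (\<Sum>i<t. w i)}"
    using Gp_restrict_measure[OF s D, of a] Gp_restrict_measure[OF s D, of b] RD by simp
  finally show ?thesis .
qed

lemma Gp_sum_tail:
  assumes s: "0 < s" and t: "1 \<le> t"
  shows "measure (Gp s m) {w. c \<le> (\<Sum>i<t. w i)} = 1 - Phi ((c - real t * m) / (s * sqrt (real t)))"
proof -
  interpret prob_space "Gp s m" by (rule prob_space_Gp[OF s])
  let ?S = "\<lambda>w::nat\<Rightarrow>real. \<Sum>i<t. w i"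
  let ?sd = "s * sqrt (real t)"
  have sd: "0 < ?sd" using s t by simp
  have ind: "indep_vars (\<lambda>_. borel) (\<lambda>i w. w i) {..<t}"
    using Gp_indep[OF s] by (rule indep_vars_subset) auto
  have dist: "distributed (Gp s m) lborel (\<lambda>w. w i) (normal_density m s)" for i
  proof -
    have "distr (Gp s m) lborel (\<lambda>w. w i) = distr (Gp s m) borel (\<lambda>w. w i)"
      by (intro distr_cong) auto
    also have "\<dots> = density lborel (normal_density m s)" using Gp_component_borel[OF s] by (simp add: Nm_def)
    finally show ?thesis unfolding distributed_def by auto
  qed
  have "distributed (Gp s m) lborel ?S (normal_density (\<Sum>i<t. m) (sqrt (\<Sum>i<t. s\<^sup>2)))"
    using t s by (intro sum_indep_normal ind dist) (auto simp: lessThan_empty_iff)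
  moreover have "(\<Sum>i<t. m) = real t * m" "sqrt (\<Sum>i<t. s\<^sup>2) = ?sd"
    using s by (auto simp: real_sqrt_mult)
  ultimately have d1: "distributed (Gp s m) lborel ?S (normal_density (real t * m) ?sd)" by simp
  have d2: "distributed (Gp s m) lborel (\<lambda>w. (?S w - real t * m) / ?sd) std_normal_density"
    using d1 normal_standard_normal_convert[OF sd] by simp
  let ?A = "{(c - real t * m) / ?sd..}"
  have pre: "(\<lambda>w. (?S w - real t * m) / ?sd) -` ?A \<inter> space (Gp s m) = {w. c \<le> ?S w}"
    using sd by (auto simp: divide_le_cancel)
  have "emeasure (Gp s m) {w. c \<le> ?S w} = (\<integral>\<^sup>+x. ennreal (std_normal_density x) * indicator ?A x \<partial>lborel)"
    using distributed_emeasure[OF d2, of ?A] pre by simp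
  also have "\<dots> = emeasure (density lborel std_normal_density) ?A"
    by (rule emeasure_density[symmetric]) auto
  finally have "measure (Gp s m) {w. c \<le> ?S w} = measure (density lborel std_normal_density) ?A"
    unfolding measure_def by simp
  also have "\<dots> = 1 - Phi ((c - real t * m) / ?sd)"
    by (subst measure_std_density) (auto simp: Phi_tail')
  finally show ?thesis .
qed

lemma local_set:
  assumes B: "B \<in> sets path_space"
    and loc: "\<And>w w'. (\<forall>i<t. w i = w' i) \<Longrightarrow> w \<in> B \<Longrightarrow> w' \<in> B"
  shows "\<exists>C \<in> sets (PiM {..<t} (\<lambda>_. borel :: real measure)). B = (\<lambda>w. restrict w {..<t}) -` C"
proof -
  define ext where "ext = (\<lambda>(r::nat\<Rightarrow>real) i. if i < t then r i else 0)"
  have m: "ext \<in> measurable (PiM {..<t} (\<lambda>_. borel :: real measure)) path_space"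
    unfolding path_space_def ext_def
  proof (rule measurable_PiM_single')
    fix i :: nat
    show "(\<lambda>r::nat\<Rightarrow>real. if i < t then r i else 0) \<in> borel_measurable (PiM {..<t} (\<lambda>_. borel))"
      by (cases "i < t") (auto intro: measurable_component_singleton[where M="\<lambda>_. borel", simplified])
  qed (auto simp: space_PiM)
  let ?C = "ext -` B \<inter> space (PiM {..<t} (\<lambda>_. borel :: real measure))"
  have C: "?C \<in> sets (PiM {..<t} (\<lambda>_. borel :: real measure))"
    using measurable_sets[OF m B] .
  have "B = (\<lambda>w. restrict w {..<t}) -` ?C"
  proof (intro set_eqI iffI)
    fix w assume "w \<in> B"
    then have "ext (restrict w {..<t}) \<in> B" by (rule loc[rotated]) (auto simp: ext_def)
    then show "w \<in> (\<lambda>w. restrict w {..<t}) -` ?C" by (auto simp: space_PiM)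
  next
    fix w assume "w \<in> (\<lambda>w. restrict w {..<t}) -` ?C"
    then have "ext (restrict w {..<t}) \<in> B" by auto
    then show "w \<in> B" by (rule loc[rotated]) (auto simp: ext_def)
  qed
  then show ?thesis using C by blast
qed

lemma TV_Phi:
  assumes s: "0 < s" and t: "1 \<le> t" and d: "0 < d" and C: "C \<in> sets (PiM {..<t} (\<lambda>_. borel :: real measure))"
  shows "measure (Gp s 0) ((\<lambda>w. restrict w {..<t}) -` C) - measure (Gp s (-d)) ((\<lambda>w. restrict w {..<t}) -` C)
    \<le> 2 * Phi (d * sqrt (real t) / (2 * s)) - 1"
proof -
  let ?c = "real t * (0 + - d) / 2"
  have "measure (Gp s 0) ((\<lambda>w. restrict w {..<t}) -` C) - measure (Gp s (-d)) ((\<lambda>w. restrict w {..<t}) -` C)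
     \<le> measure (Gp s 0) {w. ?c \<le> (\<Sum>i<t. w i)} - measure (Gp s (-d)) {w. ?c \<le> (\<Sum>i<t. w i)}"
    using d by (intro TV[OF s _ C]) auto
  also have "\<dots> = (1 - Phi ((?c - real t * 0) / (s * sqrt (real t)))) - (1 - Phi ((?c - real t * (-d)) / (s * sqrt (real t))))"
    using Gp_sum_tail[OF s t] by simp
  also have "(?c - real t * 0) / (s * sqrt (real t)) = - (d * sqrt (real t) / (2 * s))"
  proof -
    have "real t = sqrt (real t) * sqrt (real t)" by simp
    then show ?thesis using s t by (simp add: field_simps)
  qed
  also have "(?c - real t * (-d)) / (s * sqrt (real t)) = d * sqrt (real t) / (2 * s)"
  proof -
    have "real t = sqrt (real t) * sqrt (real t)" by simp
    then show ?thesis using s t by (simp add: field_simps)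
  qed
  finally have *: "measure (Gp s 0) ((\<lambda>w. restrict w {..<t}) -` C) - measure (Gp s (-d)) ((\<lambda>w. restrict w {..<t}) -` C)
    \<le> (1 - Phi (- (d * sqrt (real t) / (2 * s)))) - (1 - Phi (d * sqrt (real t) / (2 * s)))" .
  show ?thesis using * Phi_sym[of "d * sqrt (real t) / (2 * s)"] by linarith
qed

lemma part1_width:
  fixes \<sigma> \<alpha> \<epsilon> :: real and t :: nat
  assumes \<sigma>: "\<sigma> > 0" and \<alpha>: "\<alpha> > 0" and \<epsilon>: "\<epsilon> > 0" and ae: "\<alpha> + 2 * \<epsilon> < 1" and t: "t \<ge> 1"
    and CI: "tail_sym_CI (in_Qsig \<sigma>) \<alpha> lw up"
  shows "2 * \<sigma> / sqrt (real t) * Phi_inv (1 - \<alpha> / 2 - \<epsilon>) \<le> width_q (Gp \<sigma> 0) \<epsilon> lw up t"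
proof -
  let ?p = "1 - \<alpha> / 2 - \<epsilon>"
  have p: "1/2 < ?p" "?p < 1" using \<alpha> \<epsilon> ae by auto
  define z where "z = Phi_inv ?p"
  have z0: "0 < z"
  proof -
    have "0 \<le> z" unfolding z_def by (rule Phi_inv_nonneg[OF p])
    moreover have "z \<noteq> 0" using Phi_Phi_inv[OF p] Phi_0 p unfolding z_def by auto
    ultimately show ?thesis by simp
  qed
  define bd where "bd = 2 * \<sigma> / sqrt (real t) * z"
  have st: "0 < sqrt (real t)" using t by simp
  have bd0: "0 < bd" unfolding bd_def using \<sigma> z0 st by simp
  have lwm: "lw t \<in> borel_measurable path_space" and upm: "up t \<in> borel_measurable path_space"
    and loc: "\<And>w w'. (\<forall>i<t. w i = w' i) \<Longrightarrow> lw t w = lw t w' \<and> up t w = up t w'"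
    using CI t unfolding tail_sym_CI_def by auto
  have CIb: "measure Q {w \<in> space Q. \<mu> \<le> lw t w} \<le> \<alpha> / 2 \<and> measure Q {w \<in> space Q. \<mu> \<ge> up t w} \<le> \<alpha> / 2"
    if "in_Qsig \<sigma> Q \<mu>" for Q \<mu> using CI t that unfolding tail_sym_CI_def by auto
  let ?Q0 = "Gp \<sigma> 0"
  interpret Q0: prob_space ?Q0 by (rule prob_space_Gp[OF \<sigma>])
  have lwQ: "lw t \<in> borel_measurable (Gp \<sigma> m)" and upQ: "up t \<in> borel_measurable (Gp \<sigma> m)" for m
    using lwm upm by (auto simp: measurable_cong_sets[OF sets_Gp refl])
  have upS: "{w. 0 \<ge> up t w} \<in> sets (Gp \<sigma> m)" for m
  proof -
    have "up t -` {..0} \<inter> space (Gp \<sigma> m) \<in> sets (Gp \<sigma> m)" by (rule measurable_sets[OF upQ]) simp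
    then show ?thesis by (simp add: vimage_def)
  qed
  have lwS: "{w. e \<le> lw t w} \<in> sets (Gp \<sigma> m)" for m e
  proof -
    have "lw t -` {e..} \<inter> space (Gp \<sigma> m) \<in> sets (Gp \<sigma> m)" by (rule measurable_sets[OF lwQ]) simp
    then show ?thesis by (simp add: vimage_def)
  qed
  have wS: "{w \<in> space (Gp \<sigma> m). up t w - lw t w \<le> e} \<in> sets (Gp \<sigma> m)" for m e
  proof -
    have "(\<lambda>w. up t w - lw t w) -` {..e} \<inter> space (Gp \<sigma> m) \<in> sets (Gp \<sigma> m)"
      by (rule measurable_sets[OF borel_measurable_diff[OF upQ lwQ]]) simp
    then show ?thesis by (simp add: vimage_def)
  qed
  let ?K = "{c. 1 - \<epsilon> \<le> measure ?Q0 {w \<in> space ?Q0. up t w - lw t w \<le> c}}"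
  have key: "bd \<le> c" if c: "c \<in> ?K" for c
  proof (rule ccontr)
    assume "\<not> bd \<le> c"
    define d where "d = (max c 0 + bd) / 2"
    have d0: "0 < d" and dc: "c < d" and dbd: "d < bd" using \<open>\<not> bd \<le> c\<close> bd0 unfolding d_def by auto
    let ?B = "{w. up t w - lw t w \<le> c \<and> 0 < up t w}"
    have f1: "(\<lambda>w. up t w - lw t w) \<in> borel_measurable path_space"
      using upm lwm by (rule borel_measurable_diff)
    have "(\<lambda>w. up t w - lw t w) -` {..c} \<inter> space path_space \<inter> (up t -` {0<..} \<inter> space path_space) \<in> sets path_space"
      by (intro sets.Int measurable_sets[OF f1] measurable_sets[OF upm]) auto
    moreover have "(\<lambda>w. up t w - lw t w) -` {..c} \<inter> space path_space \<inter> (up t -` {0<..} \<inter> space path_space) = ?B"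
      by auto
    ultimately have Bs: "?B \<in> sets path_space" by simp
    obtain C where C: "C \<in> sets (PiM {..<t} (\<lambda>_. borel :: real measure))" and BC: "?B = (\<lambda>w. restrict w {..<t}) -` C"
    proof -
      have "\<And>w w'. (\<forall>i<t. w i = w' i) \<Longrightarrow> w \<in> ?B \<Longrightarrow> w' \<in> ?B"
      proof -
        fix w w' assume "\<forall>i<t. w i = w' i" "w \<in> ?B"
        then show "w' \<in> ?B" using loc[of w w'] by simp
      qed
      then have ex: "\<exists>C \<in> sets (PiM {..<t} (\<lambda>_. borel :: real measure)). ?B = (\<lambda>w. restrict w {..<t}) -` C"
        by (rule local_set[OF Bs])
      show ?thesis by (rule bexE[OF ex], rule that, assumption+)
    qed
    have BQ: "?B \<in> sets (Gp \<sigma> m)" for m unfolding sets_Gp by (rule Bs)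
    have "1 - \<epsilon> \<le> measure ?Q0 {w. up t w - lw t w \<le> c}" using c by simp
    also have "\<dots> \<le> measure ?Q0 (?B \<union> {w. 0 \<ge> up t w})"
      by (rule Q0.finite_measure_mono) (use BQ upS in \<open>auto simp del: space_Gp\<close>)
    also have "\<dots> \<le> measure ?Q0 ?B + measure ?Q0 {w. 0 \<ge> up t w}"
      by (rule measure_Un_le[OF BQ upS])
    also have "measure ?Q0 {w. 0 \<ge> up t w} \<le> \<alpha> / 2"
      using CIb[OF Gp_in_Qsig[OF \<sigma>, of 0]] by simp
    finally have B0: "1 - \<epsilon> - \<alpha> / 2 \<le> measure ?Q0 ?B" by simp
    interpret Qd: prob_space "Gp \<sigma> (-d)" by (rule prob_space_Gp[OF \<sigma>])
    have "measure (Gp \<sigma> (-d)) ?B \<le> measure (Gp \<sigma> (-d)) {w. -d \<le> lw t w}"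
      by (rule Qd.finite_measure_mono[OF _ lwS]) (use dc in auto)
    also have "\<dots> \<le> \<alpha> / 2"
      using CIb[OF Gp_in_Qsig[OF \<sigma>, of "-d"]] by simp
    finally have Bd: "measure (Gp \<sigma> (-d)) ?B \<le> \<alpha> / 2" .
    have "measure ?Q0 ?B - measure (Gp \<sigma> (-d)) ?B \<le> 2 * Phi (d * sqrt (real t) / (2 * \<sigma>)) - 1"
      unfolding BC by (rule TV_Phi[OF \<sigma> t d0 C])
    then have "?p \<le> Phi (d * sqrt (real t) / (2 * \<sigma>))" using B0 Bd \<epsilon> by simp
    then have "z \<le> d * sqrt (real t) / (2 * \<sigma>)" unfolding z_def by (rule Phi_inv_le[OF p])
    then have "bd \<le> d" unfolding bd_def using \<sigma> st by (simp add: field_simps)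
    then show False using dbd by simp
  qed
  have ne: "?K \<noteq> {}"
  proof -
    let ?A = "\<lambda>n::nat. {w \<in> space ?Q0. up t w - lw t w \<le> real n}"
    have "(\<lambda>n. measure ?Q0 (?A n)) \<longlonglongrightarrow> measure ?Q0 (\<Union>n. ?A n)"
    proof (rule Q0.finite_Lim_measure_incseq)
      show "range ?A \<subseteq> sets ?Q0" using wS by blast
      show "incseq ?A" by (auto simp: incseq_def order_trans)
    qed
    moreover have "(\<Union>n. ?A n) = space ?Q0"
    proof (intro set_eqI iffI)
      fix w assume "w \<in> space ?Q0"
      moreover obtain n :: nat where "up t w - lw t w \<le> real n" using real_arch_simple by blast
      ultimately show "w \<in> (\<Union>n. ?A n)" by auto
    qed auto
    moreover have "measure ?Q0 UNIV = 1" using Q0.prob_space by simp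
    ultimately have "(\<lambda>n. measure ?Q0 (?A n)) \<longlonglongrightarrow> 1" by simp
    then have "eventually (\<lambda>n. 1 - \<epsilon> < measure ?Q0 (?A n)) sequentially"
      using \<epsilon> by (intro order_tendstoD) auto
    then obtain n where "1 - \<epsilon> < measure ?Q0 (?A n)" by (auto dest: eventually_happens)
    then have "real n \<in> ?K" by simp
    then show ?thesis by blast
  qed
  have "bd \<le> Inf ?K" using ne key by (intro cInf_greatest) auto
  then show ?thesis unfolding width_q_def bd_def z_def .
qed

theorem proposition1:
  fixes \<sigma> \<alpha> \<epsilon> :: real and t :: nat
  assumes "\<sigma> > 0" and "\<alpha> > 0" and "\<epsilon> > 0" and "\<alpha> + 2 * \<epsilon> < 1" and "t \<ge> 1"
  shows "ereal (2 * \<sigma> / sqrt (real t) * Phi_inv (1 - \<alpha> / 2 - \<epsilon>)) \<le> minimax_width \<sigma> \<alpha> \<epsilon> t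
    \<and> (\<lambda>(a, e). Phi_inv (1 - a / 2 - e)
          - sqrt (ln (4 / (a + 2 * e)\<^sup>2) - ln (ln (4 / (a + 2 * e)\<^sup>2)) - ln (2 * pi)))
        \<in> O[at_right 0 \<times>\<^sub>F at_right 0](\<lambda>_. 1)"
proof (rule conjI)
  show "ereal (2 * \<sigma> / sqrt (real t) * Phi_inv (1 - \<alpha> / 2 - \<epsilon>)) \<le> minimax_width \<sigma> \<alpha> \<epsilon> t"
    unfolding minimax_width_def
  proof (rule Inf_greatest)
    fix X assume "X \<in> {Sup {ereal (width_q Q \<epsilon> lw up t) | Q \<mu>. in_Qsig \<sigma> Q \<mu>} | lw up. tail_sym_CI (in_Qsig \<sigma>) \<alpha> lw up}"
    then obtain lw up where X: "X = Sup {ereal (width_q Q \<epsilon> lw up t) | Q \<mu>. in_Qsig \<sigma> Q \<mu>}"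
      and CI: "tail_sym_CI (in_Qsig \<sigma>) \<alpha> lw up" by blast
    have "ereal (2 * \<sigma> / sqrt (real t) * Phi_inv (1 - \<alpha> / 2 - \<epsilon>)) \<le> ereal (width_q (Gp \<sigma> 0) \<epsilon> lw up t)"
      using part1_width[OF assms CI] by simp
    also have "\<dots> \<le> X" unfolding X
      using Gp_in_Qsig[OF assms(1), of 0] by (intro Sup_upper) blast
    finally show "ereal (2 * \<sigma> / sqrt (real t) * Phi_inv (1 - \<alpha> / 2 - \<epsilon>)) \<le> X" .
  qed
  show "(\<lambda>(a, e). Phi_inv (1 - a / 2 - e)
          - sqrt (ln (4 / (a + 2 * e)\<^sup>2) - ln (ln (4 / (a + 2 * e)\<^sup>2)) - ln (2 * pi)))
        \<in> O[at_right 0 \<times>\<^sub>F at_right 0](\<lambda>_. 1)" by (rule part2)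
qed

end
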